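(* Let $I\subseteq R$ be a good ideal and let $(a_1,\dots,a_n),(b_1,\dots,b_n)\in\mathbb N^n$ with $a_i\le b_i$ for all $i$. Then $I_{a_1,\dots,a_n}\subseteq I_{b_1,\dots,b_n}$.
   Context: Let $\mathbb K$ be a field, $R=\mathbb K[x_1,\dots,x_n]$, $\mathfrak m=\langle x_1,\dots,x_n\rangle$, $\mathbb N=\{0,1,2,\dots\}$. A monomial $x_1^{\alpha_1}\cdots x_n^{\alpha_n}$ is identified with the point $(\alpha_1,\dots,\alpha_n)\in\mathbb N^n$. For a monomial ideal $I$, $G(I)$ denotes its (unique) minimal monomial generating set. If $I$ is an $\mathfrak m$-primary monomial ideal, then for each $i$ there is a unique $d_i\ge1$ with $x_i^{d_i}\in G(I)$; write $\mu_i=x_i^{d_i}$. For $(a_1,\dots,a_n)\in\mathbb N^n$ the box associated to $I$ is $B_{a_1,\dots,a_n}=([a_1d_1,(a_1+1)d_1]\times\cdots\times[a_nd_n,(a_n+1)d_n])\cap\mathbb N^n$; a monomial belongs to a box if its exponent vector does. An $\mathfrak m$-primary monomial ideal $I$ is called good if for every integer $l\ge1$, every element of $G(I^l)$ belongs to some box $B_{a_1,\dots,a_n}$ with $a_1+\dots+a_n=l-1$. For a good ideal $I$ and $a=(a_1,\dots,a_n)\in\mathbb N^n$, with $l=a_1+\dots+a_n+1$, define $I_{a_1,\dots,a_n}=\left\langle \frac{m}{\mu_1^{a_1}\cdots\mu_n^{a_n}} : m\in B_{a_1,\dots,a_n}\cap G(I^l)\right\rangle$. *)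

theory Defs
  imports Main
begin

text \<open>Monomials of K[x_1,...,x_n] are identified with exponent vectors in N^n,
  represented as functions nat \<Rightarrow> nat vanishing at indices \<ge> n
  (index i < n stands for the variable x_{i+1}).
  A monomial ideal is represented by the set of (exponent vectors of) monomials it contains;
  two monomial ideals are contained in one another iff these sets are.\<close>

definition mon :: "nat \<Rightarrow> (nat \<Rightarrow> nat) set" where
  "mon n = {\<alpha>. \<forall>i\<ge>n. \<alpha> i = 0}"

definition mdvd :: "(nat \<Rightarrow> nat) \<Rightarrow> (nat \<Rightarrow> nat) \<Rightarrow> bool" where
  "mdvd \<alpha> \<beta> \<longleftrightarrow> (\<forall>i. \<alpha> i \<le> \<beta> i)"

definition mgen :: "nat \<Rightarrow> (nat \<Rightarrow> nat) set \<Rightarrow> (nat \<Rightarrow> nat) set" where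
  "mgen n S = {\<beta> \<in> mon n. \<exists>\<alpha>\<in>S. mdvd \<alpha> \<beta>}"

definition monomial_ideal :: "nat \<Rightarrow> (nat \<Rightarrow> nat) set \<Rightarrow> bool" where
  "monomial_ideal n I \<longleftrightarrow> I \<subseteq> mon n \<and> (\<forall>\<alpha>\<in>I. \<forall>\<beta>\<in>mon n. mdvd \<alpha> \<beta> \<longrightarrow> \<beta> \<in> I)"

definition mingens :: "(nat \<Rightarrow> nat) set \<Rightarrow> (nat \<Rightarrow> nat) set" where
  "mingens I = {\<alpha> \<in> I. \<forall>\<beta>\<in>I. mdvd \<beta> \<alpha> \<longrightarrow> \<beta> = \<alpha>}"

fun mpow :: "nat \<Rightarrow> (nat \<Rightarrow> nat) set \<Rightarrow> nat \<Rightarrow> (nat \<Rightarrow> nat) set" where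
  "mpow n I 0 = mon n"
| "mpow n I (Suc l) = {(\<lambda>i. \<alpha> i + \<beta> i) | \<alpha> \<beta>. \<alpha> \<in> I \<and> \<beta> \<in> mpow n I l}"

definition pure :: "nat \<Rightarrow> nat \<Rightarrow> (nat \<Rightarrow> nat)" where
  "pure i d = (\<lambda>j. if j = i then d else 0)"

text \<open>A monomial ideal is m-primary iff it is proper (1 \<notin> I) and contains a pure
  power of every variable.\<close>
definition m_primary :: "nat \<Rightarrow> (nat \<Rightarrow> nat) set \<Rightarrow> bool" where
  "m_primary n I \<longleftrightarrow> monomial_ideal n I \<and> (\<lambda>_. 0) \<notin> I \<and> (\<forall>i<n. \<exists>d. pure i d \<in> I)"

definition dexp :: "(nat \<Rightarrow> nat) set \<Rightarrow> nat \<Rightarrow> nat" where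
  "dexp I i = (LEAST d. pure i d \<in> I)"

definition box :: "nat \<Rightarrow> (nat \<Rightarrow> nat) set \<Rightarrow> (nat \<Rightarrow> nat) \<Rightarrow> (nat \<Rightarrow> nat) set" where
  "box n I a = {\<alpha> \<in> mon n. \<forall>i<n. a i * dexp I i \<le> \<alpha> i \<and> \<alpha> i \<le> (a i + 1) * dexp I i}"

definition good :: "nat \<Rightarrow> (nat \<Rightarrow> nat) set \<Rightarrow> bool" where
  "good n I \<longleftrightarrow> m_primary n I \<and>
     (\<forall>l\<ge>1. \<forall>\<alpha>\<in>mingens (mpow n I l).
        \<exists>a\<in>mon n. (\<Sum>i<n. a i) = l - 1 \<and> \<alpha> \<in> box n I a)"

definition Iblock :: "nat \<Rightarrow> (nat \<Rightarrow> nat) set \<Rightarrow> (nat \<Rightarrow> nat) \<Rightarrow> (nat \<Rightarrow> nat) set" where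
  "Iblock n I a = mgen n
     {(\<lambda>i. \<alpha> i - a i * dexp I i) | \<alpha>.
        \<alpha> \<in> box n I a \<inter> mingens (mpow n I ((\<Sum>i<n. a i) + 1))}"

end

theory Submission
  imports Defs Complex_Main
begin

lemma mdvd_trans: "mdvd a b \<Longrightarrow> mdvd b c \<Longrightarrow> mdvd a c"
  unfolding mdvd_def using le_trans by blast

lemma mpow_mon:
  assumes "monomial_ideal n I" shows "mpow n I l \<subseteq> mon n"
proof (induction l)
  case 0 show ?case by simp
next
  case (Suc l)
  show ?case
  proof
    fix x assume "x \<in> mpow n I (Suc l)"
    then obtain \<alpha> \<beta> where x: "x = (\<lambda>i. \<alpha> i + \<beta> i)" "\<alpha> \<in> I" "\<beta> \<in> mpow n I l" by auto
    have "\<alpha> \<in> mon n" using assms x(2) unfolding monomial_ideal_def by auto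
    moreover have "\<beta> \<in> mon n" using Suc x(3) by auto
    ultimately show "x \<in> mon n" using x(1) unfolding mon_def by auto
  qed
qed

lemma mingens_exists:
  assumes "S \<subseteq> mon n" "x \<in> S" shows "\<exists>\<beta>\<in>mingens S. mdvd \<beta> x"
  using assms(2)
proof (induction "\<Sum>i<n. x i" arbitrary: x rule: less_induct)
  case less
  show ?case
  proof (cases "x \<in> mingens S")
    case True then show ?thesis unfolding mdvd_def by auto
  next
    case False
    then obtain \<beta> where \<beta>: "\<beta> \<in> S" "mdvd \<beta> x" "\<beta> \<noteq> x"
      using less.prems unfolding mingens_def by auto
    then obtain i where ne: "\<beta> i \<noteq> x i" by auto
    have mons: "\<beta> \<in> mon n" "x \<in> mon n" using assms(1) \<beta>(1) less.prems by auto
    have i: "i < n"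
    proof (rule ccontr)
      assume "\<not> i < n"
      then show False using mons ne unfolding mon_def by auto
    qed
    have lt: "\<beta> i < x i" using ne \<beta>(2) unfolding mdvd_def by (metis le_neq_implies_less)
    have "(\<Sum>i<n. \<beta> i) < (\<Sum>i<n. x i)"
      by (rule sum_strict_mono_ex1) (use \<beta>(2) i lt in \<open>auto simp: mdvd_def\<close>)
    then obtain \<gamma> where "\<gamma> \<in> mingens S" "mdvd \<gamma> \<beta>" using less.hyps \<beta>(1) by blast
    then show ?thesis using \<beta>(2) mdvd_trans by blast
  qed
qed

lemma pure_in: "m_primary n I \<Longrightarrow> i < n \<Longrightarrow> pure i (dexp I i) \<in> I"
  unfolding m_primary_def dexp_def by (auto intro: LeastI_ex)

lemma dpos: assumes "m_primary n I" "i < n" shows "0 < dexp I i"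
proof (rule ccontr)
  assume "\<not> 0 < dexp I i"
  then have "dexp I i = 0" by simp
  then have "pure i (dexp I i) = (\<lambda>_. 0)" unfolding pure_def by auto
  then have "(\<lambda>_. 0) \<in> I" using pure_in[OF assms] by simp
  then show False using assms(1) unfolding m_primary_def by auto
qed

lemma add_pures:
  assumes mp: "m_primary n I" and x: "x \<in> mpow n I l"
  shows "e \<in> mon n \<Longrightarrow> (\<lambda>i. x i + e i * dexp I i) \<in> mpow n I (l + (\<Sum>i<n. e i))"
proof (induction "\<Sum>i<n. e i" arbitrary: e)
  case 0
  then have "\<forall>i<n. e i = 0" using 0 by (metis finite_lessThan lessThan_iff sum_eq_0_iff)
  moreover have "\<forall>i\<ge>n. e i = 0" using \<open>e \<in> mon n\<close> unfolding mon_def by simp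
  ultimately have "\<forall>i. e i = 0" using not_less by blast
  then show ?case using x by simp
next
  case (Suc k)
  obtain i where i: "i < n" "e i > 0"
  proof (rule ccontr)
    assume "\<not> thesis"
    then have "\<forall>i<n. e i = 0" using that by auto
    then have "(\<Sum>i<n. e i) = 0" by simp
    then show False using Suc.hyps(2) by simp
  qed
  define e' where "e' = e(i := e i - 1)"
  have e'mon: "e' \<in> mon n" using Suc.prems i unfolding mon_def e'_def by auto
  have eq: "e j = e' j + (if j = i then 1 else 0)" for j
    using i unfolding e'_def by auto
  have "(\<Sum>j<n. e j) = (\<Sum>j<n. e' j) + (\<Sum>j<n. (if j = i then 1 else 0))"
    by (subst eq) (simp add: sum.distrib)
  also have "(\<Sum>j<n. (if j = i then 1 else (0::nat))) = 1" using i by simp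
  finally have s: "(\<Sum>j<n. e j) = Suc (\<Sum>j<n. e' j)" by simp
  have IH: "(\<lambda>j. x j + e' j * dexp I j) \<in> mpow n I (l + (\<Sum>j<n. e' j))"
    using Suc.hyps(1)[of e'] s Suc.hyps(2) e'mon by simp
  have feq: "(\<lambda>j. x j + e j * dexp I j) = (\<lambda>j. pure i (dexp I i) j + (x j + e' j * dexp I j))"
  proof
    fix j show "x j + e j * dexp I j = pure i (dexp I i) j + (x j + e' j * dexp I j)"
      using i unfolding pure_def e'_def by (cases "e i") auto
  qed
  have "(\<lambda>j. x j + e j * dexp I j) \<in> mpow n I (Suc (l + (\<Sum>j<n. e' j)))"
    unfolding feq mpow.simps mem_Collect_eq using IH pure_in[OF mp i(1)]
    by (intro exI[of _ "pure i (dexp I i)"] exI[of _ "\<lambda>j. x j + e' j * dexp I j"]) simp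
  then show ?case using s by simp
qed

definition wt :: "nat \<Rightarrow> (nat \<Rightarrow> nat) set \<Rightarrow> (nat \<Rightarrow> nat) \<Rightarrow> real" where
  "wt n I x = (\<Sum>i<n. real (x i) / real (dexp I i))"

lemma mult_in:
  assumes "monomial_ideal n I" "g \<in> I" shows "(\<lambda>i. N * g i) \<in> mpow n I N"
proof (induction N)
  case 0 show ?case by (simp add: mon_def)
next
  case (Suc N)
  have "(\<lambda>i. Suc N * g i) = (\<lambda>i. g i + N * g i)" by auto
  then show ?case using Suc assms(2) by auto
qed

lemma wt_I:
  assumes gd: "good n I" and g: "g \<in> I" shows "1 \<le> wt n I g"
proof -
  have mp: "m_primary n I" using gd unfolding good_def by auto
  then have mi: "monomial_ideal n I" unfolding m_primary_def by auto
  have key: "real N - 1 \<le> real N * wt n I g" if N: "N \<ge> 1" for N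
  proof -
    have "(\<lambda>i. N * g i) \<in> mpow n I N" by (rule mult_in[OF mi g])
    then obtain \<beta> where \<beta>: "\<beta> \<in> mingens (mpow n I N)" "mdvd \<beta> (\<lambda>i. N * g i)"
      using mingens_exists mpow_mon[OF mi] by blast
    then obtain a where a: "a \<in> mon n" "(\<Sum>i<n. a i) = N - 1" "\<beta> \<in> box n I a"
      using gd N unfolding good_def by blast
    have "real N - 1 = real (N - 1)" using N by simp
    also have "\<dots> = (\<Sum>i<n. real (a i))" using a(2) by (metis of_nat_sum)
    also have "\<dots> \<le> (\<Sum>i<n. real (N * g i) / real (dexp I i))"
    proof (rule sum_mono)
      fix i assume "i \<in> {..<n}"
      then have h: "a i * dexp I i \<le> \<beta> i" "\<beta> i \<le> N * g i" "dexp I i > 0"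
        using a(3) \<beta>(2) dpos[OF mp] unfolding box_def mdvd_def by auto
      then have "a i * dexp I i \<le> N * g i" by linarith
      then have "real (a i) * real (dexp I i) \<le> real (N * g i)"
        by (metis of_nat_le_iff of_nat_mult)
      then show "real (a i) \<le> real (N * g i) / real (dexp I i)" using h(3)
        by (simp add: field_simps)
    qed
    also have "\<dots> = real N * wt n I g" unfolding wt_def by (simp add: sum_distrib_left)
    finally show ?thesis .
  qed
  show ?thesis
  proof (rule ccontr)
    assume "\<not> ?thesis" then have w: "wt n I g < 1" by simp
    obtain N :: nat where N: "1 / (1 - wt n I g) < real N" using reals_Archimedean2 by blast
    have pos: "0 < 1 - wt n I g" using w by simp
    have "0 < 1 / (1 - wt n I g)" using pos by simp
    then have "0 < real N" using N by linarith
    then have N1: "N \<ge> 1" by simp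
    have "1 < real N * (1 - wt n I g)" using N pos by (simp add: divide_less_eq)
    then have "1 < real N - real N * wt n I g" by (simp add: right_diff_distrib)
    with key[OF N1] show False by linarith
  qed
qed

lemma wt_add: "wt n I (\<lambda>i. x i + y i) = wt n I x + wt n I y"
  unfolding wt_def by (simp add: sum.distrib add_divide_distrib)

lemma wt_pow: "good n I \<Longrightarrow> y \<in> mpow n I L \<Longrightarrow> real L \<le> wt n I y"
proof (induction L arbitrary: y)
  case 0 then show ?case unfolding wt_def by (simp add: sum_nonneg)
next
  case (Suc L)
  then obtain \<alpha> \<beta> where x: "y = (\<lambda>i. \<alpha> i + \<beta> i)" "\<alpha> \<in> I" "\<beta> \<in> mpow n I L" by auto
  have "1 \<le> wt n I \<alpha>" using wt_I[OF Suc.prems(1) x(2)] .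
  moreover have "real L \<le> wt n I \<beta>" using Suc.IH[OF Suc.prems(1) x(3)] .
  moreover have "wt n I y = wt n I \<alpha> + wt n I \<beta>" unfolding x(1) by (rule wt_add)
  ultimately show ?case by simp
qed

lemma lemK:
  assumes gd: "good n I" and c: "c \<in> mon n"
    and h: "h \<in> mpow n I (Suc (\<Sum>i<n. c i))" "h \<in> box n I c"
  shows "\<exists>\<beta> \<in> box n I c \<inter> mingens (mpow n I (Suc (\<Sum>i<n. c i))). mdvd \<beta> h"
proof -
  define L where "L = Suc (\<Sum>i<n. c i)"
  have mp: "m_primary n I" using gd unfolding good_def by auto
  then have mi: "monomial_ideal n I" unfolding m_primary_def by auto
  have hL: "h \<in> mpow n I L" using h(1) unfolding L_def .
  obtain \<beta> where \<beta>: "\<beta> \<in> mingens (mpow n I L)" "mdvd \<beta> h"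
    using mingens_exists[OF mpow_mon[OF mi] hL] by blast
  have \<beta>mon: "\<beta> \<in> mon n" using \<beta>(1) mpow_mon[OF mi] unfolding mingens_def by auto
  have hbox: "\<And>i. i < n \<Longrightarrow> c i * dexp I i \<le> h i \<and> h i \<le> (c i + 1) * dexp I i"
    using h(2) unfolding box_def by auto
  have "\<exists>\<beta> \<in> box n I c \<inter> mingens (mpow n I L). mdvd \<beta> h"
  proof (cases "\<forall>i<n. c i * dexp I i \<le> \<beta> i")
    case True
    have "\<beta> \<in> box n I c" unfolding box_def
    proof (intro CollectI conjI allI impI)
      show "\<beta> \<in> mon n" by (rule \<beta>mon)
    next
      fix i assume "i < n"
      then show "c i * dexp I i \<le> \<beta> i" using True by auto
      show "\<beta> i \<le> (c i + 1) * dexp I i" using hbox[OF \<open>i<n\<close>] \<beta>(2) unfolding mdvd_def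
        by (meson le_trans)
    qed
    then show ?thesis using \<beta> by blast
  next
    case False
    then obtain s where s: "s < n" "\<beta> s < c s * dexp I s" by (auto simp: not_le)
    have gL: "\<forall>\<alpha>\<in>mingens (mpow n I L). \<exists>a\<in>mon n. (\<Sum>i<n. a i) = L - 1 \<and> \<alpha> \<in> box n I a"
    proof -
      have g1: "\<forall>l\<ge>1. \<forall>\<alpha>\<in>mingens (mpow n I l). \<exists>a\<in>mon n. (\<Sum>i<n. a i) = l - 1 \<and> \<alpha> \<in> box n I a"
        using gd unfolding good_def by blast
      have "L \<ge> 1" unfolding L_def by simp
      then show ?thesis using g1 by blast
    qed
    obtain c' where c': "c' \<in> mon n" "(\<Sum>i<n. c' i) = L - 1" "\<beta> \<in> box n I c'"
      using gL \<beta>(1) by blast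
    have c'b: "\<And>i. i < n \<Longrightarrow> c' i * dexp I i \<le> \<beta> i"
      using c'(3) unfolding box_def by auto
    have cs: "c' s < c s"
    proof (rule ccontr)
      assume "\<not> c' s < c s"
      then have "c s * dexp I s \<le> c' s * dexp I s" by (simp add: not_less)
      then show False using c'b[OF s(1)] s(2) by linarith
    qed
    have "\<exists>t<n. c t < c' t"
    proof (rule ccontr)
      assume "\<not> ?thesis" then have le: "\<forall>t<n. c' t \<le> c t" using not_less by blast
      have "(\<Sum>i<n. c' i) < (\<Sum>i<n. c i)"
        by (rule sum_strict_mono_ex1) (use le s cs in auto)
      then show False using c'(2) unfolding L_def by simp
    qed
    then obtain t where t: "t < n" "c t < c' t" by blast
    have "(c t + 1) * dexp I t \<le> c' t * dexp I t" using t(2) by (intro mult_le_mono1) simp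
    also have "\<dots> \<le> \<beta> t" using c'b[OF t(1)] .
    also have "\<dots> \<le> h t" using \<beta>(2) unfolding mdvd_def by auto
    finally have ht: "(c t + 1) * dexp I t \<le> h t" .
    define e where "e = (\<lambda>i. c i + (if i = t then 1 else 0))"
    have emon: "e \<in> mon n" using c t(1) unfolding mon_def e_def by auto
    have "(\<Sum>i<n. e i) = (\<Sum>i<n. c i) + (\<Sum>i<n. (if i = t then 1 else (0::nat)))"
      unfolding e_def by (simp add: sum.distrib)
    then have esum: "(\<Sum>i<n. e i) = L" unfolding L_def using t(1) by simp
    define z where "z = (\<lambda>i. e i * dexp I i)"
    have x0: "(\<lambda>_. 0::nat) \<in> mpow n I 0" by (simp add: mon_def)
    have "(\<lambda>i. 0 + e i * dexp I i) \<in> mpow n I (0 + (\<Sum>i<n. e i))"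
      by (rule add_pures[OF mp x0 emon])
    then have zin: "z \<in> mpow n I L" unfolding z_def using esum by simp
    have zmon: "z \<in> mon n" using emon unfolding z_def mon_def by auto
    have zh: "mdvd z h" unfolding mdvd_def
    proof
      fix i show "z i \<le> h i"
      proof (cases "i < n")
        case True
        show ?thesis
        proof (cases "i = t")
          case True then show ?thesis using ht unfolding z_def e_def by simp
        next
          case False then show ?thesis using hbox[OF \<open>i<n\<close>] unfolding z_def e_def by simp
        qed
      next
        case False then show ?thesis using zmon unfolding mon_def by simp
      qed
    qed
    obtain \<beta>' where \<beta>': "\<beta>' \<in> mingens (mpow n I L)" "mdvd \<beta>' z"
      using mingens_exists[OF mpow_mon[OF mi] zin] by blast
    have \<beta>'mon: "\<beta>' \<in> mon n" using \<beta>'(1) mpow_mon[OF mi] unfolding mingens_def by auto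
    have "\<beta>' = z"
    proof (rule ccontr)
      assume "\<beta>' \<noteq> z"
      then obtain i where ne: "\<beta>' i \<noteq> z i" by auto
      have i: "i < n"
      proof (rule ccontr)
        assume "\<not> i < n"
        then show False using \<beta>'mon zmon ne unfolding mon_def by auto
      qed
      have lt: "\<beta>' i < z i" using ne \<beta>'(2) unfolding mdvd_def by (metis le_neq_implies_less)
      have "wt n I \<beta>' < wt n I z" unfolding wt_def
      proof (rule sum_strict_mono_ex1)
        show "finite {..<n}" by simp
        show "\<forall>x\<in>{..<n}. real (\<beta>' x) / real (dexp I x) \<le> real (z x) / real (dexp I x)"
          using \<beta>'(2) unfolding mdvd_def by (auto intro: divide_right_mono)
        show "\<exists>a\<in>{..<n}. real (\<beta>' a) / real (dexp I a) < real (z a) / real (dexp I a)"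
          using i lt dpos[OF mp i] by (intro bexI[of _ i]) (auto intro: divide_strict_right_mono)
      qed
      moreover have "wt n I z = real L"
      proof -
        have "wt n I z = (\<Sum>i<n. real (e i))" unfolding wt_def z_def
          by (intro sum.cong refl) (use dpos[OF mp] in auto)
        also have "\<dots> = real L" using esum by (metis of_nat_sum)
        finally show ?thesis .
      qed
      moreover have "real L \<le> wt n I \<beta>'" using wt_pow[OF gd] \<beta>'(1) unfolding mingens_def by auto
      ultimately show False by linarith
    qed
    have "z \<in> box n I c" unfolding box_def
    proof (intro CollectI conjI allI impI)
      show "z \<in> mon n" by (rule zmon)
    next
      fix i assume "i < n"
      show "c i * dexp I i \<le> z i" unfolding z_def e_def by simp
      show "z i \<le> (c i + 1) * dexp I i" unfolding z_def e_def by simp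
    qed
    then show ?thesis using \<beta>' \<open>\<beta>' = z\<close> zh by blast
  qed
  then show ?thesis unfolding L_def .
qed

theorem mainTheorem5:
  fixes n :: nat and I :: "(nat \<Rightarrow> nat) set" and a b :: "nat \<Rightarrow> nat"
  assumes "good n I"
    and "a \<in> mon n" and "b \<in> mon n"
    and "\<forall>i<n. a i \<le> b i"
  shows "Iblock n I a \<subseteq> Iblock n I b"
proof
  fix \<gamma> assume "\<gamma> \<in> Iblock n I a"
  then obtain \<alpha> where \<gamma>: "\<gamma> \<in> mon n" "\<alpha> \<in> box n I a"
      "\<alpha> \<in> mingens (mpow n I ((\<Sum>i<n. a i) + 1))" "mdvd (\<lambda>i. \<alpha> i - a i * dexp I i) \<gamma>"
    unfolding Iblock_def mgen_def by blast
  have gd: "good n I" by fact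
  have mp: "m_primary n I" using gd unfolding good_def by auto
  then have mi: "monomial_ideal n I" unfolding m_primary_def by auto
  have ab: "a i \<le> b i" for i
  proof (cases "i < n")
    case True then show ?thesis using assms(4) by auto
  next
    case False then show ?thesis using assms(2) unfolding mon_def by auto
  qed
  have \<alpha>low: "a i * dexp I i \<le> \<alpha> i" for i
  proof (cases "i < n")
    case True then show ?thesis using \<gamma>(2) unfolding box_def by auto
  next
    case False then show ?thesis using assms(2) unfolding mon_def by auto
  qed
  define e where "e = (\<lambda>i. b i - a i)"
  have emon: "e \<in> mon n" using assms(3) unfolding mon_def e_def by auto
  have "(\<Sum>i<n. a i) + (\<Sum>i<n. e i) = (\<Sum>i<n. a i + e i)" by (simp add: sum.distrib)
  also have "\<dots> = (\<Sum>i<n. b i)" unfolding e_def by (intro sum.cong refl) (use ab in auto)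
  finally have sumeq: "(\<Sum>i<n. a i) + (\<Sum>i<n. e i) = (\<Sum>i<n. b i)" .
  define h where "h = (\<lambda>i. \<alpha> i + e i * dexp I i)"
  have \<alpha>in: "\<alpha> \<in> mpow n I ((\<Sum>i<n. a i) + 1)" using \<gamma>(3) unfolding mingens_def by auto
  have "h \<in> mpow n I ((\<Sum>i<n. a i) + 1 + (\<Sum>i<n. e i))"
    unfolding h_def by (rule add_pures[OF mp \<alpha>in emon])
  moreover have "(\<Sum>i<n. a i) + 1 + (\<Sum>i<n. e i) = Suc (\<Sum>i<n. b i)" using sumeq by simp
  ultimately have hin: "h \<in> mpow n I (Suc (\<Sum>i<n. b i))" by simp
  have hi: "h i - b i * dexp I i = \<alpha> i - a i * dexp I i \<and> b i * dexp I i \<le> h i" for i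
  proof -
    have m1: "a i * dexp I i \<le> b i * dexp I i" using ab by (intro mult_le_mono1)
    have m2: "e i * dexp I i = b i * dexp I i - a i * dexp I i" unfolding e_def by (simp add: diff_mult_distrib)
    show ?thesis unfolding h_def using m1 m2 \<alpha>low[of i] by linarith
  qed
  have hbox: "h \<in> box n I b" unfolding box_def
  proof (intro CollectI conjI allI impI)
    show "h \<in> mon n" using \<gamma>(2) emon unfolding box_def h_def mon_def by auto
  next
    fix i assume i: "i < n"
    show "b i * dexp I i \<le> h i" using hi by auto
    have "\<alpha> i \<le> (a i + 1) * dexp I i" using \<gamma>(2) i unfolding box_def by auto
    moreover have "e i * dexp I i = b i * dexp I i - a i * dexp I i" unfolding e_def by (simp add: diff_mult_distrib)
    moreover have "a i * dexp I i \<le> b i * dexp I i" using ab by (intro mult_le_mono1)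
    ultimately show "h i \<le> (b i + 1) * dexp I i" unfolding h_def by simp
  qed
  obtain \<beta> where \<beta>: "\<beta> \<in> box n I b" "\<beta> \<in> mingens (mpow n I (Suc (\<Sum>i<n. b i)))" "mdvd \<beta> h"
    using lemK[OF gd assms(3) hin hbox] by blast
  have dv: "mdvd (\<lambda>i. \<beta> i - b i * dexp I i) \<gamma>" unfolding mdvd_def
  proof
    fix i
    have "\<beta> i - b i * dexp I i \<le> h i - b i * dexp I i" using \<beta>(3) unfolding mdvd_def
      by (simp add: diff_le_mono)
    also have "\<dots> = \<alpha> i - a i * dexp I i" using hi by auto
    also have "\<dots> \<le> \<gamma> i" using \<gamma>(4) unfolding mdvd_def by auto
    finally show "\<beta> i - b i * dexp I i \<le> \<gamma> i" .
  qed
  have \<beta>2: "\<beta> \<in> box n I b \<inter> mingens (mpow n I ((\<Sum>i<n. b i) + 1))" using \<beta> by simp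
  show "\<gamma> \<in> Iblock n I b" unfolding Iblock_def mgen_def
    using \<gamma>(1) dv \<beta>2 by blast
qed

end
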